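(* There exists a comeager set $\mathcal S\subseteq\mathcal G$ such that for every $G\in\mathcal S$ and every $H\in\mathcal G$, the groups $\overline G$ and $\overline H$ are elementarily equivalent (as structures in the first-order language of group theory) if and only if $H\in\mathcal S$.
   Context: Let $\mathbb N=\{1,2,3,\dots\}$. Equip $\mathbb N^{\mathbb N\times\mathbb N}$ with the product topology of the discrete topology on $\mathbb N$. Let $\mathcal G$ be the subspace consisting of those $A\in\mathbb N^{\mathbb N\times\mathbb N}$ that are the multiplication table of a group on the underlying set $\mathbb N$ whose identity element is $1$. For $G\in\mathcal G$, $\overline G$ denotes the group on $\mathbb N$ with multiplication table $G$. The language of group theory has a binary function symbol (multiplication) and a constant symbol $1$; two structures are elementarily equivalent if they satisfy the same first-order sentences of this language. *)

theory Defs
  imports "HOL-Analysis.Analysis"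
begin

definition Npos :: "nat set" where "Npos = {n. 1 \<le> n}"

text \<open>The space N^(N x N) with the product of discrete topologies; points are
  extensional functions on N x N (value undefined outside N x N).\<close>
definition table_space :: "(nat \<times> nat \<Rightarrow> nat) topology" where
  "table_space = product_topology (\<lambda>_. discrete_topology Npos) (Npos \<times> Npos)"

definition is_group_table :: "(nat \<times> nat \<Rightarrow> nat) \<Rightarrow> bool" where
  "is_group_table A \<longleftrightarrow>
     A \<in> topspace table_space \<and>
     (\<forall>a\<in>Npos. \<forall>b\<in>Npos. \<forall>c\<in>Npos. A (A (a, b), c) = A (a, A (b, c))) \<and>
     (\<forall>a\<in>Npos. A (1, a) = a \<and> A (a, 1) = a) \<and>
     (\<forall>a\<in>Npos. \<exists>b\<in>Npos. A (a, b) = 1 \<and> A (b, a) = 1)"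

definition group_tables :: "(nat \<times> nat \<Rightarrow> nat) set" where
  "group_tables = {A. is_group_table A}"

definition group_space :: "(nat \<times> nat \<Rightarrow> nat) topology" where
  "group_space = subtopology table_space group_tables"

definition nowhere_dense_in :: "'a topology \<Rightarrow> 'a set \<Rightarrow> bool" where
  "nowhere_dense_in T A \<longleftrightarrow> A \<subseteq> topspace T \<and> T interior_of (T closure_of A) = {}"

definition meager_in :: "'a topology \<Rightarrow> 'a set \<Rightarrow> bool" where
  "meager_in T A \<longleftrightarrow>
     (\<exists>F. countable F \<and> (\<forall>B\<in>F. nowhere_dense_in T B) \<and> A \<subseteq> \<Union>F)"

definition comeager_in :: "'a topology \<Rightarrow> 'a set \<Rightarrow> bool" where
  "comeager_in T S \<longleftrightarrow> S \<subseteq> topspace T \<and> meager_in T (topspace T - S)"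

datatype gterm = GVar nat | GOne | GMul gterm gterm

datatype gform =
    GEq gterm gterm
  | GFalse
  | GNot gform
  | GAnd gform gform
  | GOr gform gform
  | GImp gform gform
  | GEx nat gform
  | GAll nat gform

fun tvars :: "gterm \<Rightarrow> nat set" where
  "tvars (GVar x) = {x}"
| "tvars GOne = {}"
| "tvars (GMul s t) = tvars s \<union> tvars t"

fun fvars :: "gform \<Rightarrow> nat set" where
  "fvars (GEq s t) = tvars s \<union> tvars t"
| "fvars GFalse = {}"
| "fvars (GNot p) = fvars p"
| "fvars (GAnd p q) = fvars p \<union> fvars q"
| "fvars (GOr p q) = fvars p \<union> fvars q"
| "fvars (GImp p q) = fvars p \<union> fvars q"
| "fvars (GEx x p) = fvars p - {x}"
| "fvars (GAll x p) = fvars p - {x}"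

definition is_sentence :: "gform \<Rightarrow> bool" where
  "is_sentence p \<longleftrightarrow> fvars p = {}"

fun teval :: "(nat \<times> nat \<Rightarrow> nat) \<Rightarrow> (nat \<Rightarrow> nat) \<Rightarrow> gterm \<Rightarrow> nat" where
  "teval A e (GVar x) = e x"
| "teval A e GOne = 1"
| "teval A e (GMul s t) = A (teval A e s, teval A e t)"

fun sat :: "(nat \<times> nat \<Rightarrow> nat) \<Rightarrow> (nat \<Rightarrow> nat) \<Rightarrow> gform \<Rightarrow> bool" where
  "sat A e (GEq s t) \<longleftrightarrow> teval A e s = teval A e t"
| "sat A e GFalse \<longleftrightarrow> False"
| "sat A e (GNot p) \<longleftrightarrow> \<not> sat A e p"
| "sat A e (GAnd p q) \<longleftrightarrow> sat A e p \<and> sat A e q"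
| "sat A e (GOr p q) \<longleftrightarrow> sat A e p \<or> sat A e q"
| "sat A e (GImp p q) \<longleftrightarrow> (sat A e p \<longrightarrow> sat A e q)"
| "sat A e (GEx x p) \<longleftrightarrow> (\<exists>a\<in>Npos. sat A (e(x := a)) p)"
| "sat A e (GAll x p) \<longleftrightarrow> (\<forall>a\<in>Npos. sat A (e(x := a)) p)"

text \<open>A sentence holds in the structure (env irrelevant; we use the constant env 1).\<close>
definition models :: "(nat \<times> nat \<Rightarrow> nat) \<Rightarrow> gform \<Rightarrow> bool" where
  "models A p \<longleftrightarrow> sat A (\<lambda>_. 1) p"

definition elem_equiv :: "(nat \<times> nat \<Rightarrow> nat) \<Rightarrow> (nat \<times> nat \<Rightarrow> nat) \<Rightarrow> bool" where
  "elem_equiv A B \<longleftrightarrow> (\<forall>p. is_sentence p \<longrightarrow> (models A p \<longleftrightarrow> models B p))"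

end

theory Submission
  imports Defs "HOL-Library.Countable"
begin

instance gterm :: countable by countable_datatype
instance gform :: countable by countable_datatype

abbreviation "GTs \<equiv> group_tables"
abbreviation "NN \<equiv> Npos \<times> Npos"

lemma topspace_X: "topspace group_space = GTs"
  unfolding group_space_def group_tables_def is_group_table_def by auto

lemma topspace_T: "topspace table_space = Pi\<^sub>E NN (\<lambda>_. Npos)"
  unfolding table_space_def by (simp add: topspace_product_topology)

lemma GT_ext: "A \<in> GTs \<Longrightarrow> A \<in> Pi\<^sub>E NN (\<lambda>_. Npos)"
  unfolding group_tables_def is_group_table_def topspace_T by auto

definition agree :: "(nat\<times>nat) set \<Rightarrow> (nat\<times>nat\<Rightarrow>nat) \<Rightarrow> (nat\<times>nat\<Rightarrow>nat) \<Rightarrow> bool" where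
  "agree D A B \<longleftrightarrow> (\<forall>d\<in>D. A d = B d)"

lemma open_char:
  "openin group_space V \<longleftrightarrow> V \<subseteq> GTs \<and>
     (\<forall>A\<in>V. \<exists>D. finite D \<and> D \<subseteq> NN \<and> (\<forall>B\<in>GTs. agree D B A \<longrightarrow> B \<in> V))"
proof
  assume "openin group_space V"
  then obtain T where T: "openin table_space T" and V: "V = T \<inter> GTs"
    unfolding group_space_def openin_subtopology by auto
  show "V \<subseteq> GTs \<and> (\<forall>A\<in>V. \<exists>D. finite D \<and> D \<subseteq> NN \<and> (\<forall>B\<in>GTs. agree D B A \<longrightarrow> B \<in> V))"
  proof (intro conjI ballI)
    show "V \<subseteq> GTs" using V by auto
    fix A assume "A \<in> V"
    then have "A \<in> T" using V by auto
    then obtain U where U: "finite {i \<in> NN. U i \<noteq> Npos}" "\<forall>i\<in>NN. U i \<subseteq> Npos"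
      "A \<in> Pi\<^sub>E NN U" "Pi\<^sub>E NN U \<subseteq> T"
      using T unfolding table_space_def openin_product_topology_alt by auto
    show "\<exists>D. finite D \<and> D \<subseteq> NN \<and> (\<forall>B\<in>GTs. agree D B A \<longrightarrow> B \<in> V)"
    proof (intro exI conjI ballI impI)
      show "finite {i \<in> NN. U i \<noteq> Npos}" by fact
      show "{i \<in> NN. U i \<noteq> Npos} \<subseteq> NN" by auto
      fix B assume B: "B \<in> GTs" "agree {i \<in> NN. U i \<noteq> Npos} B A"
      have "\<forall>i\<in>NN. B i \<in> U i"
      proof
        fix i assume i: "i \<in> NN"
        show "B i \<in> U i"
        proof (cases "U i = Npos")
          case True then show ?thesis using GT_ext[OF B(1)] i by (auto simp: PiE_iff)
        next
          case False
          then have "i \<in> {i \<in> NN. U i \<noteq> Npos}" using i by blast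
          then have "B i = A i" using B(2) unfolding agree_def by blast
          moreover have "A i \<in> U i" using U(3) i unfolding PiE_iff by blast
          ultimately show ?thesis by simp
        qed
      qed
      then have "B \<in> Pi\<^sub>E NN U"
        using GT_ext[OF B(1)] by (auto simp: PiE_iff)
      then show "B \<in> V" using U(4) V B(1) by auto
    qed
  qed
next
  assume R: "V \<subseteq> GTs \<and> (\<forall>A\<in>V. \<exists>D. finite D \<and> D \<subseteq> NN \<and> (\<forall>B\<in>GTs. agree D B A \<longrightarrow> B \<in> V))"
  then obtain DD where DD: "\<And>A. A \<in> V \<Longrightarrow> finite (DD A) \<and> DD A \<subseteq> NN \<and> (\<forall>B\<in>GTs. agree (DD A) B A \<longrightarrow> B \<in> V)"
    by metis
  define T where "T = {B \<in> Pi\<^sub>E NN (\<lambda>_. Npos). \<exists>A\<in>V. agree (DD A) B A}"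
  have "openin table_space T"
    unfolding table_space_def openin_product_topology_alt
  proof (intro ballI)
    fix B assume "B \<in> T"
    then obtain A where A: "A \<in> V" "agree (DD A) B A" and B: "B \<in> Pi\<^sub>E NN (\<lambda>_. Npos)"
      unfolding T_def by auto
    define U where "U = (\<lambda>i. if i \<in> DD A then {B i} else Npos)"
    show "\<exists>U. finite {i \<in> NN. U i \<noteq> topspace (discrete_topology Npos)} \<and>
             (\<forall>i\<in>NN. openin (discrete_topology Npos) (U i)) \<and> B \<in> Pi\<^sub>E NN U \<and> Pi\<^sub>E NN U \<subseteq> T"
    proof (intro exI conjI ballI)
      show "finite {i \<in> NN. U i \<noteq> topspace (discrete_topology Npos)}"
        by (rule finite_subset[of _ "DD A"]) (use DD[OF A(1)] in \<open>auto simp: U_def\<close>)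
      show "\<And>i. i \<in> NN \<Longrightarrow> openin (discrete_topology Npos) (U i)"
        using B by (auto simp: U_def PiE_def Pi_def)
      show "B \<in> Pi\<^sub>E NN U" using B by (auto simp: U_def PiE_def Pi_def)
      show "Pi\<^sub>E NN U \<subseteq> T"
      proof
        fix C assume C: "C \<in> Pi\<^sub>E NN U"
        have "\<forall>i\<in>NN. C i \<in> Npos"
        proof
          fix i assume i: "i \<in> NN"
          have "C i \<in> U i" "B i \<in> Npos" using C B i unfolding PiE_iff by blast+
          then show "C i \<in> Npos" unfolding U_def by (auto split: if_splits)
        qed
        then have "C \<in> Pi\<^sub>E NN (\<lambda>_. Npos)" using C unfolding PiE_iff by blast
        moreover have "agree (DD A) C A" unfolding agree_def
        proof
          fix d assume d: "d \<in> DD A"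
          then have "d \<in> NN" using DD[OF A(1)] by blast
          then have "C d \<in> U d" using C unfolding PiE_iff by blast
          then have "C d = B d" using d unfolding U_def by simp
          then show "C d = A d" using A(2) d unfolding agree_def by simp
        qed
        ultimately show "C \<in> T" using A(1) unfolding T_def by auto
      qed
    qed
  qed
  moreover have "V = T \<inter> GTs"
  proof
    show "V \<subseteq> T \<inter> GTs" using R GT_ext unfolding T_def agree_def by auto
    show "T \<inter> GTs \<subseteq> V" using DD unfolding T_def by auto
  qed
  ultimately show "openin group_space V"
    unfolding group_space_def openin_subtopology by auto
qed

lemma nowhere_dense_subset: "nowhere_dense_in T A \<Longrightarrow> B \<subseteq> A \<Longrightarrow> nowhere_dense_in T B"
proof -
  assume a: "nowhere_dense_in T A" "B \<subseteq> A"
  have "T interior_of T closure_of B \<subseteq> T interior_of T closure_of A"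
    by (intro interior_of_mono closure_of_mono a(2))
  then show ?thesis using a unfolding nowhere_dense_in_def by blast
qed

lemma meager_subset: "meager_in T A \<Longrightarrow> B \<subseteq> A \<Longrightarrow> meager_in T B"
proof -
  assume "meager_in T A" "B \<subseteq> A"
  then obtain F where "countable F" "\<forall>B\<in>F. nowhere_dense_in T B" "A \<subseteq> \<Union>F"
    unfolding meager_in_def by blast
  then show ?thesis unfolding meager_in_def using \<open>B \<subseteq> A\<close>
    by (intro exI[of _ F]) auto
qed

lemma meager_empty: "meager_in T {}"
  unfolding meager_in_def by (rule exI[of _ "{}"]) auto

lemma nowhere_dense_meager: "nowhere_dense_in T A \<Longrightarrow> meager_in T A"
  unfolding meager_in_def by (rule exI[of _ "{A}"]) auto

lemma meager_Union:
  assumes "countable \<F>" "\<And>A. A \<in> \<F> \<Longrightarrow> meager_in T A"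
  shows "meager_in T (\<Union>\<F>)"
proof -
  obtain G where G: "\<And>A. A \<in> \<F> \<Longrightarrow> countable (G A) \<and> (\<forall>B\<in>G A. nowhere_dense_in T B) \<and> A \<subseteq> \<Union>(G A)"
    using assms(2) unfolding meager_in_def by metis
  have "countable (\<Union>(G ` \<F>))" using G assms(1) by (intro countable_UN) auto
  moreover have "\<forall>B\<in>\<Union>(G ` \<F>). nowhere_dense_in T B"
  proof
    fix B assume "B \<in> \<Union>(G ` \<F>)"
    then obtain A where "A \<in> \<F>" "B \<in> G A" by blast
    then show "nowhere_dense_in T B" using G by blast
  qed
  moreover have "\<Union>\<F> \<subseteq> \<Union>(\<Union>(G ` \<F>))"
  proof
    fix x assume "x \<in> \<Union>\<F>"
    then obtain A where A: "A \<in> \<F>" "x \<in> A" by blast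
    then obtain B where "B \<in> G A" "x \<in> B" using G by blast
    then show "x \<in> \<Union>(\<Union>(G ` \<F>))" using A by blast
  qed
  ultimately show ?thesis unfolding meager_in_def by (intro exI[of _ "\<Union>(G ` \<F>)"]) simp
qed

lemma meager_UN:
  assumes "countable I" "\<And>i. i \<in> I \<Longrightarrow> meager_in T (A i)"
  shows "meager_in T (\<Union>i\<in>I. A i)"
  using meager_Union[of "A ` I" T] assms by auto

lemma meager_Un: "meager_in T A \<Longrightarrow> meager_in T B \<Longrightarrow> meager_in T (A \<union> B)"
  using meager_Union[of "{A,B}" T] by auto

lemma frontier_nowhere_dense:
  assumes "openin T W"
  shows "nowhere_dense_in T (T closure_of W - W)"
proof -
  have cl: "closedin T (T closure_of W - W)"
    using assms by (simp add: closedin_diff)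
  have "T interior_of (T closure_of W - W) = {}"
  proof (rule ccontr)
    assume "T interior_of (T closure_of W - W) \<noteq> {}"
    then obtain x where x: "x \<in> T interior_of (T closure_of W - W)" by blast
    let ?U = "T interior_of (T closure_of W - W)"
    have "openin T ?U" by simp
    moreover have "?U \<inter> T closure_of W \<noteq> {}" using x interior_of_subset by fastforce
    ultimately have "?U \<inter> W \<noteq> {}" using openin_Int_closure_of_eq_empty by blast
    then show False using interior_of_subset by fastforce
  qed
  then show ?thesis unfolding nowhere_dense_in_def
    using cl closure_of_closedin closure_of_subset_topspace by fastforce
qed

definition bp :: "'a topology \<Rightarrow> 'a set \<Rightarrow> bool" where
  "bp T A \<longleftrightarrow> A \<subseteq> topspace T \<and> (\<exists>W. openin T W \<and> meager_in T (A - W) \<and> meager_in T (W - A))"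

lemma bp_open: "openin T W \<Longrightarrow> bp T W"
  unfolding bp_def using meager_empty openin_subset by fastforce

lemma bp_compl:
  assumes "bp T A" shows "bp T (topspace T - A)"
proof -
  obtain W where W: "openin T W" "meager_in T (A - W)" "meager_in T (W - A)" and A: "A \<subseteq> topspace T"
    using assms unfolding bp_def by blast
  define W' where "W' = topspace T - T closure_of W"
  have "openin T W'" unfolding W'_def by (simp add: openin_diff)
  moreover have "meager_in T ((topspace T - A) - W')"
  proof -
    have "(topspace T - A) - W' \<subseteq> (W - A) \<union> (T closure_of W - W)"
      unfolding W'_def by auto
    moreover have "meager_in T ((W - A) \<union> (T closure_of W - W))"
      using meager_Un W(3) nowhere_dense_meager frontier_nowhere_dense W(1) by blast
    ultimately show ?thesis using meager_subset by blast
  qed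
  moreover have "meager_in T (W' - (topspace T - A))"
  proof -
    have "W' - (topspace T - A) \<subseteq> A - W"
      unfolding W'_def using closure_of_subset openin_subset[OF W(1)] by fastforce
    then show ?thesis using meager_subset W(2) by blast
  qed
  ultimately show ?thesis unfolding bp_def using bp_def assms by (intro conjI exI[of _ W']) auto
qed

lemma bp_UN:
  assumes "countable I" "\<And>i. i \<in> I \<Longrightarrow> bp T (A i)"
  shows "bp T (\<Union>i\<in>I. A i)"
proof -
  obtain W where W: "\<And>i. i \<in> I \<Longrightarrow> openin T (W i) \<and> meager_in T (A i - W i) \<and> meager_in T (W i - A i)"
    using assms(2) unfolding bp_def by metis
  have 1: "openin T (\<Union>i\<in>I. W i)" using W by blast
  have 2: "meager_in T ((\<Union>i\<in>I. A i) - (\<Union>i\<in>I. W i))"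
    by (rule meager_subset[OF meager_UN[of I T "\<lambda>i. A i - W i"]]) (use assms W in auto)
  have 3: "meager_in T ((\<Union>i\<in>I. W i) - (\<Union>i\<in>I. A i))"
    by (rule meager_subset[OF meager_UN[of I T "\<lambda>i. W i - A i"]]) (use assms W in auto)
  have 4: "(\<Union>i\<in>I. A i) \<subseteq> topspace T" using assms(2) unfolding bp_def by blast
  show ?thesis unfolding bp_def
    by (intro conjI 4 exI[of _ "\<Union>i\<in>I. W i"] 1 2 3)
qed

lemma bp_Un: "bp T A \<Longrightarrow> bp T B \<Longrightarrow> bp T (A \<union> B)"
proof -
  assume a: "bp T A" "bp T B"
  have "bp T (\<Union>i\<in>{A,B}. i)" by (rule bp_UN) (use a in auto)
  then show ?thesis by simp
qed

lemma bp_Int: "bp T A \<Longrightarrow> bp T B \<Longrightarrow> bp T (A \<inter> B)"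
proof -
  assume a: "bp T A" "bp T B"
  then have "bp T (topspace T - ((topspace T - A) \<union> (topspace T - B)))"
    by (intro bp_compl bp_Un) auto
  moreover have "topspace T - ((topspace T - A) \<union> (topspace T - B)) = A \<inter> B"
    using a unfolding bp_def by auto
  ultimately show ?thesis by simp
qed

lemma homeo_nowhere_dense:
  assumes h: "homeomorphic_map T T f" and "nowhere_dense_in T A"
  shows "nowhere_dense_in T (f ` A)"
proof -
  have A: "A \<subseteq> topspace T" and E: "T interior_of (T closure_of A) = {}"
    using assms(2) unfolding nowhere_dense_in_def by auto
  have "f ` A \<subseteq> f ` topspace T" by (rule image_mono[OF A])
  then have fA: "f ` A \<subseteq> topspace T"
    unfolding homeomorphic_imp_surjective_map[OF h] .
  have "T closure_of (f ` A) = f ` (T closure_of A)"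
    by (rule homeomorphic_map_closure_of[OF h A])
  moreover have "T interior_of (f ` (T closure_of A)) = f ` (T interior_of (T closure_of A))"
    by (rule homeomorphic_map_interior_of[OF h closure_of_subset_topspace])
  ultimately have "T interior_of (T closure_of (f ` A)) = {}" using E by simp
  then show ?thesis unfolding nowhere_dense_in_def using fA by blast
qed

lemma homeo_meager:
  assumes h: "homeomorphic_map T T f" and "meager_in T A"
  shows "meager_in T (f ` A)"
proof -
  obtain F where F: "countable F" "\<forall>B\<in>F. nowhere_dense_in T B" "A \<subseteq> \<Union>F"
    using assms(2) unfolding meager_in_def by blast
  have "countable ((`) f ` F)" using F by auto
  moreover have "\<forall>B\<in>(`) f ` F. nowhere_dense_in T B" using F homeo_nowhere_dense[OF h] by auto
  moreover have "f ` A \<subseteq> \<Union>((`) f ` F)" using F(3) by (auto simp: image_iff)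
  ultimately show ?thesis unfolding meager_in_def by (intro exI[of _ "(`) f ` F"]) simp
qed

definition perm :: "(nat \<Rightarrow> nat) \<Rightarrow> bool" where
  "perm s \<longleftrightarrow> bij s \<and> s 0 = 0 \<and> s 1 = 1"

definition act :: "(nat \<Rightarrow> nat) \<Rightarrow> (nat\<times>nat\<Rightarrow>nat) \<Rightarrow> (nat\<times>nat\<Rightarrow>nat)" where
  "act s A = (\<lambda>(i,j). if i \<in> Npos \<and> j \<in> Npos then inv s (A (s i, s j)) else undefined)"

lemma Npos_iff: "n \<in> Npos \<longleftrightarrow> n \<noteq> 0"
  unfolding Npos_def by auto

lemma perm_props:
  assumes "perm s"
  shows "\<And>n. s (inv s n) = n" "\<And>n. inv s (s n) = n" "\<And>n. n \<in> Npos \<Longrightarrow> s n \<in> Npos"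
    "\<And>n. n \<in> Npos \<Longrightarrow> inv s n \<in> Npos" "inv s 1 = 1" "inv s 0 = 0"
proof -
  have b: "bij s" and z: "s 0 = 0" and o: "s 1 = 1" using assms unfolding perm_def by auto
  show si: "\<And>n. s (inv s n) = n" by (rule surj_f_inv_f[OF bij_is_surj[OF b]])
  show is': "\<And>n. inv s (s n) = n" by (rule inv_f_f[OF bij_is_inj[OF b]])
  show "\<And>n. n \<in> Npos \<Longrightarrow> s n \<in> Npos"
    unfolding Npos_iff by (metis is' z)
  show "\<And>n. n \<in> Npos \<Longrightarrow> inv s n \<in> Npos"
    unfolding Npos_iff by (metis si z)
  show "inv s 1 = 1" using is' o by metis
  show "inv s 0 = 0" using is' z by metis
qed

lemma perm_inv: assumes "perm s" shows "perm (inv s)"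
proof -
  have "inv s 0 = 0" "inv s 1 = 1" using perm_props[OF assms] by auto
  moreover have "bij (inv s)" using assms unfolding perm_def by (simp add: bij_imp_bij_inv)
  ultimately show ?thesis unfolding perm_def by simp
qed

lemma GT_props:
  assumes "A \<in> GTs"
  shows "\<And>a b. a \<in> Npos \<Longrightarrow> b \<in> Npos \<Longrightarrow> A (a,b) \<in> Npos"
    "\<And>x. x \<notin> NN \<Longrightarrow> A x = undefined"
    "\<forall>a\<in>Npos. \<forall>b\<in>Npos. \<forall>c\<in>Npos. A (A (a, b), c) = A (a, A (b, c))"
    "\<forall>a\<in>Npos. A (1, a) = a \<and> A (a, 1) = a"
    "\<forall>a\<in>Npos. \<exists>b\<in>Npos. A (a, b) = 1 \<and> A (b, a) = 1"
  using assms GT_ext[OF assms] unfolding group_tables_def is_group_table_def PiE_iff extensional_def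
  by auto

lemma one_Npos[simp]: "(1::nat) \<in> Npos" unfolding Npos_def by simp
lemma one_Npos'[simp]: "Suc 0 \<in> Npos" unfolding Npos_def by simp

lemma act_GT:
  assumes s: "perm s" and A: "A \<in> GTs"
  shows "act s A \<in> GTs"
proof -
  note P = perm_props[OF s] and G = GT_props[OF A]
  have ap: "\<And>a b. a \<in> Npos \<Longrightarrow> b \<in> Npos \<Longrightarrow> act s A (a,b) = inv s (A (s a, s b))"
    unfolding act_def by simp
  have inN: "\<And>a b. a \<in> Npos \<Longrightarrow> b \<in> Npos \<Longrightarrow> act s A (a,b) \<in> Npos"
    using ap P G by simp
  have top: "act s A \<in> topspace table_space"
    unfolding topspace_T PiE_iff extensional_def
    using inN by (auto simp: act_def)
  have assoc: "\<forall>a\<in>Npos. \<forall>b\<in>Npos. \<forall>c\<in>Npos. act s A (act s A (a, b), c) = act s A (a, act s A (b, c))"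
    using ap inN P G by simp
  have idl: "\<forall>a\<in>Npos. act s A (1, a) = a \<and> act s A (a, 1) = a"
  proof (intro ballI conjI)
    fix a assume a: "a \<in> Npos"
    have s1: "s 1 = 1" using s unfolding perm_def by simp
    show "act s A (1, a) = a" using ap[OF one_Npos a] s1 G(4) P(2,3) a by simp
    show "act s A (a, 1) = a" using ap[OF a one_Npos] s1 G(4) P(2,3) a by simp
  qed
  have inv: "\<forall>a\<in>Npos. \<exists>b\<in>Npos. act s A (a, b) = 1 \<and> act s A (b, a) = 1"
  proof
    fix a assume a: "a \<in> Npos"
    obtain b where b: "b \<in> Npos" "A (s a, b) = 1" "A (b, s a) = 1" using G(5) P(3)[OF a] by blast
    show "\<exists>b\<in>Npos. act s A (a, b) = 1 \<and> act s A (b, a) = 1"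
      by (rule bexI[of _ "inv s b"]) (use a b ap P in auto)
  qed
  show ?thesis unfolding group_tables_def is_group_table_def
    using top assoc idl inv by blast
qed

lemma act_act:
  assumes s: "perm s" and A: "A \<in> GTs"
  shows "act (inv s) (act s A) = A"
proof
  fix x :: "nat \<times> nat"
  obtain i j where x: "x = (i,j)" by fastforce
  note P = perm_props[OF s] and G = GT_props[OF A]
  show "act (inv s) (act s A) x = A x"
  proof (cases "i \<in> Npos \<and> j \<in> Npos")
    case True
    have "inv (inv s) = s" using s unfolding perm_def by (simp add: inv_inv_eq)
    then show ?thesis using True P unfolding x act_def by simp
  next
    case False
    then show ?thesis using G(2)[of x] unfolding x act_def by auto
  qed
qed

lemma teval_Npos:
  assumes A: "A \<in> GTs" and e: "\<And>x. e x \<in> Npos"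
  shows "teval A e t \<in> Npos"
  by (induction t) (use e GT_props[OF A] in auto)

lemma teval_act:
  assumes s: "perm s" and A: "A \<in> GTs" and e: "\<And>x. e x \<in> Npos"
  shows "teval (act s A) e t = inv s (teval A (s \<circ> e) t)"
proof (induction t)
  note P = perm_props[OF s]
  have e': "\<And>x. (s \<circ> e) x \<in> Npos" using e P by simp
  case (GMul t1 t2)
  have "teval A (s \<circ> e) t1 \<in> Npos" "teval A (s \<circ> e) t2 \<in> Npos"
    by (rule teval_Npos[OF A], rule e')+
  then show ?case using GMul P by (simp add: act_def o_def)
qed (use perm_props[OF s] in auto)

lemma sat_act:
  assumes s: "perm s" and A: "A \<in> GTs"
  shows "(\<And>x. e x \<in> Npos) \<Longrightarrow> sat (act s A) e p \<longleftrightarrow> sat A (s \<circ> e) p"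
proof (induction p arbitrary: e)
  case (GEq t1 t2)
  have "inj (inv s)" using s unfolding perm_def by (simp add: bij_imp_bij_inv bij_is_inj)
  have t: "\<And>t. teval (act s A) e t = inv s (teval A (s \<circ> e) t)"
    using teval_act[OF s A, where e=e] GEq.prems by blast
  show ?case using \<open>inj (inv s)\<close> by (simp add: t inj_eq o_def)
next
  case (GEx x p)
  note P = perm_props[OF s]
  have "sat (act s A) e (GEx x p) \<longleftrightarrow> (\<exists>a\<in>Npos. sat (act s A) (e(x := a)) p)"
    by simp
  also have "\<dots> \<longleftrightarrow> (\<exists>a\<in>Npos. sat A (s \<circ> e(x := a)) p)"
    apply (rule bex_cong[OF refl])
    apply (rule GEx.IH)
    using GEx.prems by auto
  also have "\<dots> \<longleftrightarrow> (\<exists>a\<in>Npos. sat A ((s \<circ> e)(x := s a)) p)"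
  proof -
    have "\<And>a. s \<circ> e(x := a) = (s \<circ> e)(x := s a)" by (rule ext) simp
    then show ?thesis by simp
  qed
  also have "\<dots> \<longleftrightarrow> (\<exists>b\<in>Npos. sat A ((s \<circ> e)(x := b)) p)"
    using P by metis
  finally show ?case by (simp only: sat.simps)
next
  case (GAll x p)
  note P = perm_props[OF s]
  have "sat (act s A) e (GAll x p) \<longleftrightarrow> (\<forall>a\<in>Npos. sat (act s A) (e(x := a)) p)"
    by simp
  also have "\<dots> \<longleftrightarrow> (\<forall>a\<in>Npos. sat A (s \<circ> e(x := a)) p)"
    apply (rule ball_cong[OF refl])
    apply (rule GAll.IH)
    using GAll.prems by auto
  also have "\<dots> \<longleftrightarrow> (\<forall>a\<in>Npos. sat A ((s \<circ> e)(x := s a)) p)"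
  proof -
    have "\<And>a. s \<circ> e(x := a) = (s \<circ> e)(x := s a)" by (rule ext) simp
    then show ?thesis by simp
  qed
  also have "\<dots> \<longleftrightarrow> (\<forall>b\<in>Npos. sat A ((s \<circ> e)(x := b)) p)"
    using P by metis
  finally show ?case by (simp only: sat.simps)
qed auto

lemma models_act:
  assumes s: "perm s" and A: "A \<in> GTs"
  shows "models (act s A) p \<longleftrightarrow> models A p"
proof -
  have s1: "s 1 = 1" using s unfolding perm_def by auto
  show ?thesis unfolding models_def using sat_act[OF s A, of "\<lambda>_. 1" p] s1 by (simp add: o_def)
qed

lemma act_cont:
  assumes s: "perm s"
  shows "continuous_map group_space group_space (act s)"
  unfolding continuous_map_def topspace_X
proof (intro conjI allI impI ballI Pi_I)
  fix A assume "A \<in> GTs" then show "act s A \<in> GTs" using act_GT[OF s] by blast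
next
  fix V assume V: "openin group_space V"
  note P = perm_props[OF s]
  show "openin group_space {A \<in> GTs. act s A \<in> V}"
    unfolding open_char
  proof (intro conjI ballI)
    show "{A \<in> GTs. act s A \<in> V} \<subseteq> GTs" by blast
    fix A assume A: "A \<in> {A \<in> GTs. act s A \<in> V}"
    then obtain D where D: "finite D" "D \<subseteq> NN" "\<forall>B\<in>GTs. agree D B (act s A) \<longrightarrow> B \<in> V"
      using V unfolding open_char by blast
    let ?D = "(\<lambda>(i,j). (s i, s j)) ` D"
    show "\<exists>D. finite D \<and> D \<subseteq> NN \<and> (\<forall>B\<in>GTs. agree D B A \<longrightarrow> B \<in> {A \<in> GTs. act s A \<in> V})"
    proof (intro exI conjI ballI impI)
      show "finite ?D" using D by simp
      show "?D \<subseteq> NN" using D P by auto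
      fix B assume B: "B \<in> GTs" "agree ?D B A"
      have "agree D (act s B) (act s A)"
        unfolding agree_def
      proof
        fix d assume d: "d \<in> D"
        obtain i j where ij: "d = (i,j)" by fastforce
        have "B (s i, s j) = A (s i, s j)" using B(2) d ij unfolding agree_def by force
        then show "act s B d = act s A d" unfolding ij act_def by simp
      qed
      then show "B \<in> {A \<in> GTs. act s A \<in> V}" using D(3) B(1) act_GT[OF s B(1)] by blast
    qed
  qed
qed

lemma act_homeo:
  assumes s: "perm s"
  shows "homeomorphic_map group_space group_space (act s)"
proof -
  have "homeomorphic_maps group_space group_space (act s) (act (inv s))"
    unfolding homeomorphic_maps_def topspace_X
  proof (intro conjI ballI)
    show "continuous_map group_space group_space (act s)" by (rule act_cont[OF s])
    show "continuous_map group_space group_space (act (inv s))" by (rule act_cont[OF perm_inv[OF s]])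
    fix A assume "A \<in> GTs"
    then show "act (inv s) (act s A) = A" by (rule act_act[OF s])
  next
    fix A assume A: "A \<in> GTs"
    have "inv (inv s) = s" using s unfolding perm_def by (simp add: inv_inv_eq)
    then show "act s (act (inv s) A) = A" using act_act[OF perm_inv[OF s] A] by simp
  qed
  then show ?thesis using homeomorphic_map_maps by blast
qed

lemma extend_bij:
  assumes A: "countable A" "infinite A" and B: "countable B" "infinite B"
    and F: "finite F" "F \<subseteq> A" and f: "inj_on f F" "f ` F \<subseteq> B"
  shows "\<exists>g. bij_betw g A B \<and> (\<forall>x\<in>F. g x = f x)"
proof -
  have "countable (A - F)" "infinite (A - F)" using A F by auto
  then obtain a :: "_ \<Rightarrow> nat" where a: "bij_betw a (A - F) UNIV" by (rule countableE_infinite)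
  have "countable (B - f ` F)" "infinite (B - f ` F)" using B F by auto
  then obtain b :: "_ \<Rightarrow> nat" where b: "bij_betw b (B - f ` F) UNIV" by (rule countableE_infinite)
  define h where "h = inv_into (B - f ` F) b \<circ> a"
  have h: "bij_betw h (A - F) (B - f ` F)"
    unfolding h_def by (rule bij_betw_trans[OF a bij_betw_inv_into[OF b]])
  define g where "g x = (if x \<in> F then f x else h x)" for x
  have g1: "bij_betw g F (f ` F)"
    using f(1) by (simp add: bij_betw_def g_def inj_on_def image_def)
  have g2: "bij_betw g (A - F) (B - f ` F)"
    using h by (rule bij_betw_cong[THEN iffD1, rotated]) (simp add: g_def)
  have "bij_betw g (F \<union> (A - F)) (f ` F \<union> (B - f ` F))"
    by (rule bij_betw_combine[OF g1 g2]) blast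
  moreover have "F \<union> (A - F) = A" "f ` F \<union> (B - f ` F) = B" using F f by auto
  ultimately have "bij_betw g A B" by simp
  then show ?thesis by (intro exI[of _ g]) (simp add: g_def)
qed

lemma Npos_inf: "infinite Npos"
proof
  assume "finite Npos"
  then obtain n where "\<forall>x\<in>Npos. x \<le> n" using finite_nat_set_iff_bounded_le by blast
  moreover have "Suc n \<in> Npos" unfolding Npos_def by simp
  ultimately show False by fastforce
qed

lemma NN_inf: "infinite NN"
proof
  assume "finite NN"
  then have "finite (fst ` NN)" by (rule finite_imageI)
  moreover have "fst ` NN = Npos" using one_Npos by (metis empty_iff fst_image_times)
  ultimately show False using Npos_inf by simp
qed

definition basic :: "((nat\<times>nat)\<times>nat) set \<Rightarrow> (nat\<times>nat\<Rightarrow>nat) set" where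
  "basic q = {A \<in> GTs. \<forall>(d,v)\<in>q. A d = v}"

definition Qs :: "((nat\<times>nat)\<times>nat) set set" where
  "Qs = {q. finite q \<and> q \<subseteq> NN \<times> Npos}"

lemma countable_Qs: "countable Qs"
  by (rule countable_subset[OF _ countable_Collect_finite]) (auto simp: Qs_def)

lemma basic_open:
  assumes "q \<in> Qs" shows "openin group_space (basic q)"
  unfolding open_char
proof (intro conjI ballI)
  show "basic q \<subseteq> GTs" unfolding basic_def by blast
  fix A assume A: "A \<in> basic q"
  show "\<exists>D. finite D \<and> D \<subseteq> NN \<and> (\<forall>B\<in>GTs. agree D B A \<longrightarrow> B \<in> basic q)"
  proof (intro exI conjI ballI impI)
    show "finite (fst ` q)" using assms by (simp add: Qs_def)
    show "fst ` q \<subseteq> NN" using assms by (auto simp: Qs_def)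
    fix B assume B: "B \<in> GTs" "agree (fst ` q) B A"
    show "B \<in> basic q" unfolding basic_def
    proof (intro CollectI conjI B(1) ballI)
      fix x assume x: "x \<in> q"
      obtain d v where dv: "x = (d,v)" by fastforce
      have "B d = A d" using B(2) x dv unfolding agree_def by force
      moreover have "A d = v" using A x dv unfolding basic_def by auto
      ultimately show "case x of (d, v) \<Rightarrow> B d = v" using dv by simp
    qed
  qed
qed

lemma open_basic:
  assumes V: "openin group_space V" and A: "A \<in> V"
  shows "\<exists>q\<in>Qs. A \<in> basic q \<and> basic q \<subseteq> V"
proof -
  obtain D where D: "finite D" "D \<subseteq> NN" "\<forall>B\<in>GTs. agree D B A \<longrightarrow> B \<in> V"
    using V A unfolding open_char by blast
  have AG: "A \<in> GTs" using V A unfolding open_char by blast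
  define q where "q = (\<lambda>d. (d, A d)) ` D"
  have "q \<in> Qs" unfolding Qs_def q_def using D GT_props(1)[OF AG] by auto
  moreover have "A \<in> basic q" unfolding basic_def q_def using AG by auto
  moreover have "basic q \<subseteq> V"
  proof
    fix B assume "B \<in> basic q"
    then have "B \<in> GTs" "agree D B A" unfolding basic_def q_def agree_def by auto
    then show "B \<in> V" using D(3) by blast
  qed
  ultimately show ?thesis by blast
qed

lemma prod_table:
  assumes G1: "G1 \<in> GTs" and G2: "G2 \<in> GTs"
    and bb: "bij_betw b Npos NN" and b1: "b 1 = (1,1)"
  defines "b' \<equiv> inv_into Npos b"
  defines "P \<equiv> (\<lambda>(x,y). if x \<in> Npos \<and> y \<in> Npos then
                 b' (G1 (fst (b x), fst (b y)), G2 (snd (b x), snd (b y))) else undefined)"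
  shows "P \<in> GTs"
    and "\<And>x y. x \<in> Npos \<Longrightarrow> y \<in> Npos \<Longrightarrow> P (x,y) = b' (G1 (fst (b x), fst (b y)), G2 (snd (b x), snd (b y)))"
proof -
  note g1 = GT_props[OF G1] and g2 = GT_props[OF G2]
  have bi: "\<And>a. a \<in> Npos \<Longrightarrow> b' (b a) = a"
    unfolding b'_def using bb by (simp add: bij_betw_def inv_into_f_f)
  have ib: "\<And>p. p \<in> NN \<Longrightarrow> b (b' p) = p"
    unfolding b'_def using bb by (simp add: bij_betw_def f_inv_into_f)
  have b'N: "\<And>p. p \<in> NN \<Longrightarrow> b' p \<in> Npos"
    unfolding b'_def using bb by (metis bij_betw_def inv_into_into)
  have bN: "\<And>a. a \<in> Npos \<Longrightarrow> b a \<in> NN"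
    using bb by (meson bij_betwE)
  show Pe: "\<And>x y. x \<in> Npos \<Longrightarrow> y \<in> Npos \<Longrightarrow> P (x,y) = b' (G1 (fst (b x), fst (b y)), G2 (snd (b x), snd (b y)))"
    unfolding P_def by simp
  define m where "m p r = (G1 (fst p, fst r), G2 (snd p, snd r))" for p r
  have mN: "\<And>p r. p \<in> NN \<Longrightarrow> r \<in> NN \<Longrightarrow> m p r \<in> NN"
    unfolding m_def using g1(1) g2(1) by (auto simp: mem_Times_iff)
  have Pm: "\<And>x y. x \<in> Npos \<Longrightarrow> y \<in> Npos \<Longrightarrow> P (x,y) = b' (m (b x) (b y))"
    using Pe unfolding m_def by simp
  have PN: "\<And>x y. x \<in> Npos \<Longrightarrow> y \<in> Npos \<Longrightarrow> P (x,y) \<in> Npos"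
    using Pm b'N mN bN by simp
  have top: "P \<in> topspace table_space"
    unfolding topspace_T PiE_iff extensional_def
    using PN by (auto simp: P_def)
  have massoc: "\<And>p r t. p \<in> NN \<Longrightarrow> r \<in> NN \<Longrightarrow> t \<in> NN \<Longrightarrow> m (m p r) t = m p (m r t)"
    unfolding m_def using g1(3) g2(3) by (auto simp: mem_Times_iff)
  have assoc: "\<forall>a\<in>Npos. \<forall>c\<in>Npos. \<forall>d\<in>Npos. P (P (a, c), d) = P (a, P (c, d))"
  proof (intro ballI)
    fix a c d assume a: "a \<in> Npos" and c: "c \<in> Npos" and d: "d \<in> Npos"
    have "P (P (a, c), d) = b' (m (m (b a) (b c)) (b d))"
      using Pm[OF PN[OF a c] d] Pm[OF a c] ib mN bN a c by simp
    also have "\<dots> = b' (m (b a) (m (b c) (b d)))" using massoc bN a c d by simp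
    also have "\<dots> = P (a, P (c, d))"
      using Pm[OF a PN[OF c d]] Pm[OF c d] ib mN bN c d by simp
    finally show "P (P (a, c), d) = P (a, P (c, d))" .
  qed
  have b'1: "b' (1,1) = 1" using bi[OF one_Npos] b1 by simp
  have idl: "\<forall>a\<in>Npos. P (1, a) = a \<and> P (a, 1) = a"
  proof (intro ballI conjI)
    fix a assume a: "a \<in> Npos"
    obtain x y where xy: "b a = (x,y)" by fastforce
    have "x \<in> Npos" "y \<in> Npos" using bN[OF a] xy by auto
    then have "m (1,1) (b a) = b a" "m (b a) (1,1) = b a"
      unfolding m_def xy using g1(4) g2(4) by auto
    then show "P (1, a) = a" "P (a, 1) = a" using Pm[OF one_Npos a] Pm[OF a one_Npos] b1 bi[OF a] by simp_all
  qed
  have inv: "\<forall>a\<in>Npos. \<exists>c\<in>Npos. P (a, c) = 1 \<and> P (c, a) = 1"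
  proof
    fix a assume a: "a \<in> Npos"
    obtain x y where xy: "b a = (x,y)" by fastforce
    have x: "x \<in> Npos" and y: "y \<in> Npos" using bN[OF a] xy by auto
    obtain x' where x': "x' \<in> Npos" "G1 (x,x') = 1" "G1 (x',x) = 1" using g1(5) x by blast
    obtain y' where y': "y' \<in> Npos" "G2 (y,y') = 1" "G2 (y',y) = 1" using g2(5) y by blast
    have c: "b' (x',y') \<in> Npos" "b (b' (x',y')) = (x',y')" using b'N ib x' y' by auto
    show "\<exists>c\<in>Npos. P (a, c) = 1 \<and> P (c, a) = 1"
    proof (intro bexI[of _ "b' (x',y')"] conjI c(1))
      show "P (a, b' (x', y')) = 1" using Pm[OF a c(1)] c(2) xy x' y' b'1 unfolding m_def by simp
      show "P (b' (x', y'), a) = 1" using Pm[OF c(1) a] c(2) xy x' y' b'1 unfolding m_def by simp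
    qed
  qed
  show "P \<in> GTs" unfolding group_tables_def is_group_table_def
    using top assoc idl inv by blast
qed

definition labels :: "((nat\<times>nat)\<times>nat) set \<Rightarrow> nat set" where
  "labels q = {1} \<union> fst ` fst ` q \<union> snd ` fst ` q \<union> snd ` q"

lemma labels_props:
  assumes "q \<in> Qs"
  shows "finite (labels q)" "labels q \<subseteq> Npos" "1 \<in> labels q"
    "\<And>i j v. ((i,j),v) \<in> q \<Longrightarrow> i \<in> labels q \<and> j \<in> labels q \<and> v \<in> labels q"
  using assms unfolding Qs_def labels_def by (auto simp: mem_Times_iff image_iff) force+

lemma transitive:
  assumes q0: "q0 \<in> Qs" and q: "q \<in> Qs" and G1: "G1 \<in> basic q0" and G2: "G2 \<in> basic q"
  shows "\<exists>s. perm s \<and> (\<exists>H\<in>basic q0. act s H \<in> basic q)"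
proof -
  have G1G: "G1 \<in> GTs" and G2G: "G2 \<in> GTs" using G1 G2 unfolding basic_def by auto
  note L1 = labels_props[OF q0] and L2 = labels_props[OF q]
  have "\<exists>b. bij_betw b Npos NN \<and> (\<forall>x\<in>labels q0. b x = (x,1))"
    by (rule extend_bij) (use L1 Npos_inf NN_inf in \<open>auto simp: inj_on_def\<close>)
  then obtain b where bb: "bij_betw b Npos NN" and bL: "\<And>x. x \<in> labels q0 \<Longrightarrow> b x = (x,1)" by blast
  define b' where "b' = inv_into Npos b"
  have b1: "b 1 = (1,1)" using bL L1(3) by simp
  have bi: "\<And>a. a \<in> Npos \<Longrightarrow> b' (b a) = a"
    unfolding b'_def using bb by (simp add: bij_betw_def inv_into_f_f)
  have ib: "\<And>p. p \<in> NN \<Longrightarrow> b (b' p) = p"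
    unfolding b'_def using bb by (simp add: bij_betw_def f_inv_into_f)
  have b'N: "\<And>p. p \<in> NN \<Longrightarrow> b' p \<in> Npos"
    unfolding b'_def using bb by (metis bij_betw_def inv_into_into)
  have b'inj: "inj_on b' NN"
    unfolding b'_def using bb by (metis bij_betw_def inj_on_inv_into order_refl)
  have b'1: "b' (1,1) = 1" using bi[OF one_Npos] b1 by simp
  define P where "P = (\<lambda>(x,y). if x \<in> Npos \<and> y \<in> Npos then
                 b' (G1 (fst (b x), fst (b y)), G2 (snd (b x), snd (b y))) else undefined)"
  have PG: "P \<in> GTs" and Pe: "\<And>x y. x \<in> Npos \<Longrightarrow> y \<in> Npos \<Longrightarrow> P (x,y) = b' (G1 (fst (b x), fst (b y)), G2 (snd (b x), snd (b y)))"
    using prod_table[OF G1G G2G bb b1] unfolding P_def b'_def by auto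
  note g1 = GT_props[OF G1G] and g2 = GT_props[OF G2G]
  have P0: "P \<in> basic q0" unfolding basic_def
  proof (intro CollectI conjI PG ballI)
    fix x assume x: "x \<in> q0"
    obtain i j v where ijv: "x = ((i,j),v)" by (metis prod.collapse)
    have l: "i \<in> labels q0" "j \<in> labels q0" "v \<in> labels q0" using L1(4) x ijv by auto
    then have N: "i \<in> Npos" "j \<in> Npos" "v \<in> Npos" using L1(2) by auto
    have "G1 (i,j) = v" using G1 x ijv unfolding basic_def by auto
    then have "P (i,j) = b' (v, 1)" using Pe[OF N(1,2)] bL l g2(4) by simp
    also have "\<dots> = v" using bi[OF N(3)] bL[OF l(3)] by simp
    finally show "case x of (d, v) \<Rightarrow> P d = v" using ijv by simp
  qed
  define f where "f m = (if m = 0 then 0 else b' (1,m))" for m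
  have fN: "\<And>m. m \<in> labels q \<Longrightarrow> f m \<in> Npos"
  proof -
    fix m assume "m \<in> labels q"
    then have "m \<in> Npos" using L2(2) by auto
    then have "m \<noteq> 0" "(1,m) \<in> NN" by (auto simp: Npos_iff)
    then show "f m \<in> Npos" by (simp add: f_def b'N)
  qed
  have "\<exists>s. bij_betw s (UNIV::nat set) UNIV \<and> (\<forall>x\<in>insert 0 (labels q). s x = f x)"
  proof (rule extend_bij)
    show "inj_on f (insert 0 (labels q))"
    proof (rule inj_onI)
      fix x y assume x: "x \<in> insert 0 (labels q)" and y: "y \<in> insert 0 (labels q)" and e: "f x = f y"
      show "x = y"
      proof (cases "x = 0 \<or> y = 0")
        case True
        then show ?thesis using x y e fN unfolding Npos_iff by (metis f_def insertE)
      next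
        case False
        then have "x \<in> labels q" "y \<in> labels q" using x y by auto
        then have "(1,x) \<in> NN" "(1,y) \<in> NN" using L2(2) by auto
        moreover have "b' (1,x) = b' (1,y)" using e False unfolding f_def by simp
        ultimately have "(1::nat,x) = (1,y)" using b'inj by (meson inj_onD)
        then show ?thesis by simp
      qed
    qed
  qed (use L2 in auto)
  then obtain s where sb: "bij s" and sf: "\<And>x. x \<in> insert 0 (labels q) \<Longrightarrow> s x = f x" by blast
  have s1: "s 1 = 1" using sf[of 1] L2(3) b'1 unfolding f_def by simp
  have ps: "perm s" unfolding perm_def using sb s1 sf[of 0] unfolding f_def by simp
  note Ps = perm_props[OF ps]
  have "act s P \<in> basic q" unfolding basic_def
  proof (intro CollectI conjI act_GT[OF ps PG] ballI)
    fix x assume x: "x \<in> q"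
    obtain i j v where ijv: "x = ((i,j),v)" by (metis prod.collapse)
    have l: "i \<in> labels q" "j \<in> labels q" "v \<in> labels q" using L2(4) x ijv by auto
    then have N: "i \<in> Npos" "j \<in> Npos" "v \<in> Npos" using L2(2) by auto
    have si: "\<And>k. k \<in> labels q \<Longrightarrow> s k = b' (1,k) \<and> b (s k) = (1,k)"
    proof -
      fix k assume k: "k \<in> labels q"
      then have "k \<noteq> 0" "(1,k) \<in> NN" using L2(2) Npos_iff by auto
      then show "s k = b' (1,k) \<and> b (s k) = (1,k)" using sf[of k] k ib unfolding f_def by simp
    qed
    have "G2 (i,j) = v" using G2 x ijv unfolding basic_def by auto
    have "act s P (i,j) = inv s (P (s i, s j))" using N unfolding act_def by simp
    also have "\<dots> = inv s (b' (1, v))"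
    proof -
      have "b (s i) = (1,i)" "b (s j) = (1,j)" using si[OF l(1)] si[OF l(2)] by auto
      then show ?thesis using Pe[OF Ps(3)[OF N(1)] Ps(3)[OF N(2)]] g1(4) \<open>G2 (i,j) = v\<close> by simp
    qed
    also have "\<dots> = v" using si[OF l(3)] Ps(2) by metis
    finally show "case x of (d, v) \<Rightarrow> act s P d = v" using ijv by simp
  qed
  then show ?thesis using ps P0 by blast
qed

lemma zero_one:
  assumes M: "M \<subseteq> GTs" "bp group_space M"
    and inv: "\<And>s A. perm s \<Longrightarrow> A \<in> M \<Longrightarrow> act s A \<in> M"
  shows "meager_in group_space M \<or> meager_in group_space (GTs - M)"
proof -
  obtain W where W: "openin group_space W" "meager_in group_space (M - W)" "meager_in group_space (W - M)"
    using M(2) unfolding bp_def by blast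
  have WG: "W \<subseteq> GTs" using W(1) openin_subset topspace_X by metis
  show ?thesis
  proof (cases "W = {}")
    case True
    then show ?thesis using W(2) by simp
  next
    case False
    then obtain A0 where "A0 \<in> W" by blast
    then obtain q0 where q0: "q0 \<in> Qs" "A0 \<in> basic q0" "basic q0 \<subseteq> W"
      using open_basic[OF W(1)] by blast
    define Q' where "Q' = {q \<in> Qs. basic q \<noteq> {}}"
    have "\<forall>q\<in>Q'. \<exists>s. perm s \<and> (\<exists>H\<in>basic q0. act s H \<in> basic q)"
    proof
      fix q assume "q \<in> Q'"
      then obtain G2 where "q \<in> Qs" "G2 \<in> basic q" unfolding Q'_def by blast
      then show "\<exists>s. perm s \<and> (\<exists>H\<in>basic q0. act s H \<in> basic q)"
        using transitive[OF q0(1) _ q0(2)] by blast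
    qed
    then obtain sg where sg: "\<And>q. q \<in> Q' \<Longrightarrow> perm (sg q) \<and> (\<exists>H\<in>basic q0. act (sg q) H \<in> basic q)"
      by metis
    define Ob where "Ob = (\<Union>q\<in>Q'. act (sg q) ` W)"
    have openO: "openin group_space Ob"
      unfolding Ob_def
    proof (rule openin_Union, safe)
      fix q assume "q \<in> Q'"
      then have h: "homeomorphic_map group_space group_space (act (sg q))" using sg act_homeo by blast
      show "openin group_space (act (sg q) ` W)"
        using homeomorphic_map_openness[OF h, of W] W(1) WG topspace_X by simp
    qed
    have OG: "Ob \<subseteq> GTs" using openO openin_subset topspace_X by metis
    have cQ': "countable Q'" using countable_Qs unfolding Q'_def by (rule countable_subset[rotated]) blast
    have nd: "nowhere_dense_in group_space (GTs - Ob)"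
    proof -
      have cl: "closedin group_space (GTs - Ob)" using openO topspace_X by (metis closedin_diff closedin_topspace)
      have "group_space interior_of (GTs - Ob) = {}"
      proof (rule ccontr)
        assume "group_space interior_of (GTs - Ob) \<noteq> {}"
        then obtain x where x: "x \<in> group_space interior_of (GTs - Ob)" by blast
        then obtain q where q: "q \<in> Qs" "x \<in> basic q" "basic q \<subseteq> group_space interior_of (GTs - Ob)"
          using open_basic[OF openin_interior_of] by blast
        then have "q \<in> Q'" unfolding Q'_def by blast
        then obtain H where H: "H \<in> basic q0" "act (sg q) H \<in> basic q" using sg by blast
        have "H \<in> W" using q0(3) H(1) by blast
        then have "act (sg q) H \<in> act (sg q) ` W" by (rule imageI)
        then have "act (sg q) H \<in> Ob" unfolding Ob_def using \<open>q \<in> Q'\<close> by (intro UN_I)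
        moreover have "act (sg q) H \<in> GTs - Ob" using H(2) q(3) interior_of_subset[of group_space "GTs - Ob"] by blast
        ultimately show False by blast
      qed
      then show ?thesis unfolding nowhere_dense_in_def
        using cl closure_of_closedin topspace_X by fastforce
    qed
    have sub: "GTs - M \<subseteq> (GTs - Ob) \<union> (\<Union>q\<in>Q'. act (sg q) ` (W - M))"
    proof
      fix x assume x: "x \<in> GTs - M"
      show "x \<in> (GTs - Ob) \<union> (\<Union>q\<in>Q'. act (sg q) ` (W - M))"
      proof (cases "x \<in> Ob")
        case True
        then obtain q H where qH: "q \<in> Q'" "H \<in> W" "x = act (sg q) H" unfolding Ob_def by blast
        have "H \<notin> M" using inv[of "sg q" H] sg[OF qH(1)] qH(3) x by blast
        then show ?thesis using qH by blast
      next
        case False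
        then show ?thesis using x by blast
      qed
    qed
    have "meager_in group_space (\<Union>q\<in>Q'. act (sg q) ` (W - M))"
    proof (rule meager_UN[OF cQ'])
      fix q assume "q \<in> Q'"
      then have h: "homeomorphic_map group_space group_space (act (sg q))" using sg act_homeo by blast
      show "meager_in group_space (act (sg q) ` (W - M))" by (rule homeo_meager[OF h W(3)])
    qed
    then have "meager_in group_space ((GTs - Ob) \<union> (\<Union>q\<in>Q'. act (sg q) ` (W - M)))"
      using meager_Un nowhere_dense_meager[OF nd] by blast
    then show ?thesis using meager_subset sub by blast
  qed
qed

lemma teval_dep:
  assumes A: "A \<in> GTs"
  shows "\<exists>D. finite D \<and> D \<subseteq> NN \<and> (\<forall>B\<in>GTs. agree D B A \<longrightarrow> teval B e t = teval A e t)"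
proof (induction t)
  case (GMul t1 t2)
  then obtain D1 D2 where D1: "finite D1" "D1 \<subseteq> NN" "\<forall>B\<in>GTs. agree D1 B A \<longrightarrow> teval B e t1 = teval A e t1"
    and D2: "finite D2" "D2 \<subseteq> NN" "\<forall>B\<in>GTs. agree D2 B A \<longrightarrow> teval B e t2 = teval A e t2"
    by blast
  let ?p = "(teval A e t1, teval A e t2)"
  show ?case
  proof (intro exI[of _ "D1 \<union> D2 \<union> ({?p} \<inter> NN)"] conjI ballI impI)
    show "finite (D1 \<union> D2 \<union> ({?p} \<inter> NN))" using D1 D2 by simp
    show "D1 \<union> D2 \<union> ({?p} \<inter> NN) \<subseteq> NN" using D1 D2 by blast
    fix B assume B: "B \<in> GTs" "agree (D1 \<union> D2 \<union> ({?p} \<inter> NN)) B A"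
    have "teval B e t1 = teval A e t1" "teval B e t2 = teval A e t2"
      using D1(3) D2(3) B unfolding agree_def by auto
    moreover have "B ?p = A ?p"
    proof (cases "?p \<in> NN")
      case True then show ?thesis using B(2) unfolding agree_def by blast
    next
      case False then show ?thesis using GT_props(2)[OF B(1)] GT_props(2)[OF A] by metis
    qed
    ultimately show "teval B e (GMul t1 t2) = teval A e (GMul t1 t2)" by simp
  qed
qed (auto intro: exI[of _ "{}"])

lemma bp_sat: "bp group_space {A \<in> GTs. sat A e p}"
proof (induction p arbitrary: e)
  case (GEq t1 t2)
  have "openin group_space {A \<in> GTs. sat A e (GEq t1 t2)}"
    unfolding open_char
  proof (intro conjI ballI)
    show "{A \<in> GTs. sat A e (GEq t1 t2)} \<subseteq> GTs" by blast
    fix A assume A: "A \<in> {A \<in> GTs. sat A e (GEq t1 t2)}"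
    then have AG: "A \<in> GTs" by simp
    obtain D1 where D1: "finite D1" "D1 \<subseteq> NN" "\<forall>B\<in>GTs. agree D1 B A \<longrightarrow> teval B e t1 = teval A e t1"
      using teval_dep[OF AG, of e t1] by blast
    obtain D2 where D2: "finite D2" "D2 \<subseteq> NN" "\<forall>B\<in>GTs. agree D2 B A \<longrightarrow> teval B e t2 = teval A e t2"
      using teval_dep[OF AG, of e t2] by blast
    show "\<exists>D. finite D \<and> D \<subseteq> NN \<and> (\<forall>B\<in>GTs. agree D B A \<longrightarrow> B \<in> {A \<in> GTs. sat A e (GEq t1 t2)})"
    proof (intro exI[of _ "D1 \<union> D2"] conjI ballI impI)
      show "finite (D1 \<union> D2)" using D1 D2 by simp
      show "D1 \<union> D2 \<subseteq> NN" using D1 D2 by blast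
      fix B assume B: "B \<in> GTs" "agree (D1 \<union> D2) B A"
      then have "agree D1 B A" "agree D2 B A" unfolding agree_def by blast+
      then have "teval B e t1 = teval A e t1" "teval B e t2 = teval A e t2"
        using D1(3) D2(3) B(1) by blast+
      then show "B \<in> {A \<in> GTs. sat A e (GEq t1 t2)}" using A B(1) by simp
    qed
  qed
  then show ?case by (rule bp_open)
next
  case GFalse
  show ?case using bp_open[of group_space "{}"] by simp
next
  case (GNot p)
  have "{A \<in> GTs. sat A e (GNot p)} = topspace group_space - {A \<in> GTs. sat A e p}"
    by (auto simp: topspace_X)
  then show ?case using bp_compl[OF GNot] by simp
next
  case (GAnd p1 p2)
  have "{A \<in> GTs. sat A e (GAnd p1 p2)} = {A \<in> GTs. sat A e p1} \<inter> {A \<in> GTs. sat A e p2}" by auto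
  then show ?case using bp_Int[OF GAnd(1) GAnd(2)] by simp
next
  case (GOr p1 p2)
  have "{A \<in> GTs. sat A e (GOr p1 p2)} = {A \<in> GTs. sat A e p1} \<union> {A \<in> GTs. sat A e p2}" by auto
  then show ?case using bp_Un[OF GOr(1) GOr(2)] by simp
next
  case (GImp p1 p2)
  have "{A \<in> GTs. sat A e (GImp p1 p2)} = (topspace group_space - {A \<in> GTs. sat A e p1}) \<union> {A \<in> GTs. sat A e p2}"
    by (auto simp: topspace_X)
  then show ?case using bp_Un[OF bp_compl[OF GImp(1)] GImp(2)] by simp
next
  case (GEx x p)
  have "{A \<in> GTs. sat A e (GEx x p)} = (\<Union>a\<in>Npos. {A \<in> GTs. sat A (e(x := a)) p})" by auto
  moreover have "bp group_space (\<Union>a\<in>Npos. {A \<in> GTs. sat A (e(x := a)) p})"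
    by (rule bp_UN) (use GEx in auto)
  ultimately show ?case by simp
next
  case (GAll x p)
  have "{A \<in> GTs. sat A e (GAll x p)} =
        topspace group_space - (\<Union>a\<in>Npos. topspace group_space - {A \<in> GTs. sat A (e(x := a)) p})"
    by (auto simp: topspace_X)
  moreover have "bp group_space (topspace group_space - (\<Union>a\<in>Npos. topspace group_space - {A \<in> GTs. sat A (e(x := a)) p}))"
    by (intro bp_compl bp_UN) (use GAll bp_compl in auto)
  ultimately show ?case by simp
qed

theorem corollary5p9:
  shows "\<exists>S. comeager_in group_space S \<and>
           (\<forall>G\<in>S. \<forall>H\<in>group_tables. elem_equiv G H \<longleftrightarrow> H \<in> S)"
proof -
  define Mod where "Mod p = {A \<in> GTs. models A p}" for p
  define C where "C p = (if meager_in group_space (Mod p) then GTs - Mod p else Mod p)" for p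
  have mC: "meager_in group_space (GTs - C p)" for p
  proof -
    have "bp group_space (Mod p)" unfolding Mod_def models_def by (rule bp_sat)
    moreover have "\<And>s A. perm s \<Longrightarrow> A \<in> Mod p \<Longrightarrow> act s A \<in> Mod p"
      unfolding Mod_def using act_GT models_act by blast
    ultimately have "meager_in group_space (Mod p) \<or> meager_in group_space (GTs - Mod p)"
      by (intro zero_one) (auto simp: Mod_def)
    moreover have "GTs - (GTs - Mod p) = Mod p" unfolding Mod_def by blast
    ultimately show ?thesis unfolding C_def by auto
  qed
  define S where "S = {A \<in> GTs. \<forall>p. is_sentence p \<longrightarrow> A \<in> C p}"
  have "comeager_in group_space S"
    unfolding comeager_in_def
  proof
    show "S \<subseteq> topspace group_space" unfolding S_def topspace_X by blast
    have "topspace group_space - S = (\<Union>p\<in>{p. is_sentence p}. GTs - C p)"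
      unfolding S_def topspace_X by blast
    moreover have "meager_in group_space (\<Union>p\<in>{p. is_sentence p}. GTs - C p)"
      by (rule meager_UN) (auto intro: mC)
    ultimately show "meager_in group_space (topspace group_space - S)" by simp
  qed
  moreover have "\<forall>G\<in>S. \<forall>H\<in>group_tables. elem_equiv G H \<longleftrightarrow> H \<in> S"
  proof (intro ballI iffI)
    fix G H assume G: "G \<in> S" and H: "H \<in> group_tables" and eq: "elem_equiv G H"
    have "H \<in> C p" if p: "is_sentence p" for p
    proof -
      have "G \<in> C p" using G p unfolding S_def by blast
      moreover have "models G p \<longleftrightarrow> models H p" using eq p unfolding elem_equiv_def by blast
      ultimately show ?thesis using H unfolding C_def Mod_def by (auto split: if_splits)
    qed
    then show "H \<in> S" using H unfolding S_def by blast
  next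
    fix G H assume G: "G \<in> S" and H: "H \<in> S"
    show "elem_equiv G H" unfolding elem_equiv_def
    proof (intro allI impI)
      fix p assume p: "is_sentence p"
      have "G \<in> C p" "H \<in> C p" using G H p unfolding S_def by blast+
      then show "models G p \<longleftrightarrow> models H p" unfolding C_def Mod_def by (auto split: if_splits)
    qed
  qed
  ultimately show ?thesis by blast
qed

end
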